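(* There exists a simple undirected graph on $N$ nodes with adjacency matrix $\mathbf{A}\in\{0,1\}^{N\times N}$ such that for all $\mathbf{R}\in\mathbb{R}^{N\times 2}$ and $\mathbf{C}\in\mathbb{R}^{2\times N}$, it is not the case that $\operatorname{sign}(A_{ij})=\operatorname{sign}((\mathbf{R}\mathbf{C})_{ij})$ for all $i\neq j$.
   Context: $\operatorname{sign}:\mathbb{R}\to\{+,-\}$ takes the value $-$ on $(-\infty,0]$ and $+$ on $(0,\infty)$. Graphs have no self-loops and diagonal entries of adjacency matrices are ignored throughout. *)

theory Defs
  imports Main Complex_Main
begin

datatype pm = Plus | Minus

definition sign :: "real \<Rightarrow> pm" where
  "sign x = (if x > 0 then Plus else Minus)"

definition simple_adj :: "nat \<Rightarrow> (nat \<Rightarrow> nat \<Rightarrow> real) \<Rightarrow> bool" where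
  "simple_adj N A \<longleftrightarrow> (\<forall>i<N. \<forall>j<N. A i j \<in> {0,1} \<and> A i j = A j i) \<and> (\<forall>i<N. A i i = 0)"

end

theory Submission
  imports Defs
begin

lemma dep3:
  fixes u1 u2 v1 v2 w1 w2 :: real
  shows "\<exists>a b c. (a \<noteq> 0 \<or> b \<noteq> 0 \<or> c \<noteq> 0) \<and> a*u1+b*v1+c*w1 = 0 \<and> a*u2+b*v2+c*w2 = 0"
proof (cases "v1*w2 - v2*w1 \<noteq> 0 \<or> w1*u2 - w2*u1 \<noteq> 0 \<or> u1*v2 - u2*v1 \<noteq> 0")
  case True
  show ?thesis
    apply (rule exI[of _ "v1*w2 - v2*w1"], rule exI[of _ "w1*u2 - w2*u1"], rule exI[of _ "u1*v2 - u2*v1"])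
    using True by (auto simp: algebra_simps)
next
  case False
  then have d: "u1*v2 = u2*v1" by simp
  show ?thesis
  proof (cases "u1 = 0 \<and> u2 = 0")
    case True then show ?thesis by (intro exI[of _ 1] exI[of _ 0]) auto
  next
    case F2: False
    show ?thesis
    proof (cases "u1 \<noteq> 0")
      case True then show ?thesis
        by (intro exI[of _ v1] exI[of _ "-u1"] exI[of _ 0]) (auto simp: algebra_simps d)
    next
      case False
      with F2 have "u2 \<noteq> 0" by simp
      then show ?thesis using False d
        by (intro exI[of _ v2] exI[of _ "-u2"] exI[of _ 0]) (auto simp: algebra_simps)
    qed
  qed
qed

lemma signs:
  fixes a b c x0 x1 x2 y0 y1 y2 z0 z1 z2 w0 w1 w2 :: real
  assumes "a \<noteq> 0 \<or> b \<noteq> 0 \<or> c \<noteq> 0"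
    and "a*x0+b*x1+c*x2 = 0" "x0 > 0" "x1 > 0" "x2 > 0"
    and "a*y0+b*y1+c*y2 = 0" "y0 > 0" "y1 \<le> 0" "y2 \<le> 0"
    and "a*z0+b*z1+c*z2 = 0" "z1 > 0" "z0 \<le> 0" "z2 \<le> 0"
    and "a*w0+b*w1+c*w2 = 0" "w2 > 0" "w0 \<le> 0" "w1 \<le> 0"
  shows False
proof -
  have key: "\<And>p q r s t u::real. p > 0 \<Longrightarrow> s > 0 \<Longrightarrow> q \<le> 0 \<Longrightarrow> r \<le> 0 \<Longrightarrow> t \<le> 0 \<Longrightarrow> u \<le> 0
      \<Longrightarrow> p*s + q*t + r*u > 0"
    by (simp add: add_pos_nonneg mult_nonpos_nonpos)
  have key2: "\<And>p q r s t u::real. p \<ge> 0 \<Longrightarrow> q \<ge> 0 \<Longrightarrow> r \<ge> 0 \<Longrightarrow> s > 0 \<Longrightarrow> t > 0 \<Longrightarrow> u > 0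
      \<Longrightarrow> p*s + q*t + r*u = 0 \<Longrightarrow> p = 0 \<and> q = 0 \<and> r = 0"
    by (smt (verit) mult_nonneg_nonneg mult_pos_pos)
  have ap: "\<not> (a \<ge> 0 \<and> b \<ge> 0 \<and> c \<ge> 0)"
    using key2[of a b c x0 x1 x2] assms by auto
  have an: "\<not> (a \<le> 0 \<and> b \<le> 0 \<and> c \<le> 0)"
    using key2[of "-a" "-b" "-c" x0 x1 x2] assms by auto
  have 1: "\<not> (a > 0 \<and> b \<le> 0 \<and> c \<le> 0)" using key[of a y0 b c y1 y2] assms by auto
  have 2: "\<not> (b > 0 \<and> a \<le> 0 \<and> c \<le> 0)" using key[of b z1 a c z0 z2] assms by (auto simp: algebra_simps)
  have 3: "\<not> (c > 0 \<and> a \<le> 0 \<and> b \<le> 0)" using key[of c w2 a b w0 w1] assms by (auto simp: algebra_simps)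
  have 4: "\<not> (a < 0 \<and> b \<ge> 0 \<and> c \<ge> 0)" using key[of "-a" y0 "-b" "-c" y1 y2] assms by auto
  have 5: "\<not> (b < 0 \<and> a \<ge> 0 \<and> c \<ge> 0)" using key[of "-b" z1 "-a" "-c" z0 z2] assms by (auto simp: algebra_simps)
  have 6: "\<not> (c < 0 \<and> a \<ge> 0 \<and> b \<ge> 0)" using key[of "-c" w2 "-a" "-b" w0 w1] assms by (auto simp: algebra_simps)
  show False using ap an 1 2 3 4 5 6 by linarith
qed

definition AA :: "nat \<Rightarrow> nat \<Rightarrow> real" where
  "AA i j = (if (i,j) \<in> {(0,3),(1,3),(2,3),(0,4),(1,5),(2,6),(3,0),(3,1),(3,2),(4,0),(5,1),(6,2)} then 1 else 0)"

theorem theorem1: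
  shows "\<exists>N::nat. \<exists>A::nat \<Rightarrow> nat \<Rightarrow> real. simple_adj N A \<and>
     (\<forall>(R::nat \<Rightarrow> nat \<Rightarrow> real) (C::nat \<Rightarrow> nat \<Rightarrow> real).
        \<not> (\<forall>i<N. \<forall>j<N. i \<noteq> j \<longrightarrow> sign (A i j) = sign (\<Sum>k<2. R i k * C k j)))"
proof (intro exI conjI allI notI)
  show "simple_adj 7 AA"
    unfolding simple_adj_def AA_def by (simp add: numeral_eq_Suc All_less_Suc)
next
  fix R C :: "nat \<Rightarrow> nat \<Rightarrow> real"
  assume H: "\<forall>i<7. \<forall>j<7. i \<noteq> j \<longrightarrow> sign (AA i j) = sign (\<Sum>k<2. R i k * C k j)"
  define p where "p i j = R i 0 * C 0 j + R i 1 * C 1 j" for i j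
  have hp: "sign (AA i j) = sign (p i j)" if "i < 7" "j < 7" "i \<noteq> j" for i j
    using H that by (simp add: p_def numeral_eq_Suc)
  have pos: "p i j > 0" if "i < 7" "j < 7" "i \<noteq> j" "AA i j = 1" for i j
    using hp[OF that(1-3)] that(4) by (auto simp: sign_def split: if_splits)
  have neg: "p i j \<le> 0" if "i < 7" "j < 7" "i \<noteq> j" "AA i j = 0" for i j
    using hp[OF that(1-3)] that(4) by (auto simp: sign_def split: if_splits)
  obtain a b c where abc: "a \<noteq> 0 \<or> b \<noteq> 0 \<or> c \<noteq> 0"
    "a*R 0 0 + b*R 1 0 + c*R 2 0 = 0" "a*R 0 1 + b*R 1 1 + c*R 2 1 = 0"
    using dep3 by blast
  have lin: "a * p 0 j + b * p 1 j + c * p 2 j = 0" for j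
  proof -
    have "a * p 0 j + b * p 1 j + c * p 2 j
        = (a*R 0 0 + b*R 1 0 + c*R 2 0) * C 0 j + (a*R 0 1 + b*R 1 1 + c*R 2 1) * C 1 j"
      by (simp add: p_def algebra_simps)
    then show ?thesis using abc by simp
  qed
  show False
    apply (rule signs[OF abc(1) lin[of 3] _ _ _ lin[of 4] _ _ _ lin[of 5] _ _ _ lin[of 6]])
    by (auto intro!: pos neg simp: AA_def)
qed

end
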